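(* Let $s_{\mathrm{vi}}(n)$ denote the number of unlabeled (i.e., up to isomorphism) vertically indecomposable semimodular lattices with $n$ elements. Then there exists $n_0$ such that $s_{\mathrm{vi}}(n) \ge 2.6797^n$ for all $n \ge n_0$.
   Context: All lattices are finite and nonempty, and are counted up to isomorphism. Semimodular means upper semimodular. A knot of a lattice $X$ is an element distinct from the top and bottom of $X$ that is comparable to every element of $X$. A lattice is vertically indecomposable if it has no knot. *)

theory Defs
  imports Complex_Main
begin

text \<open>A finite lattice with n elements is represented by an order relation
  le on the carrier {..<n} (the relation is required to vanish outside the carrier,
  so that there are only finitely many such representations).\<close>

definition carrier_of :: "nat \<Rightarrow> nat set" where
  "carrier_of n = {..<n}"

definition is_sup :: "(nat \<Rightarrow> nat \<Rightarrow> bool) \<Rightarrow> nat set \<Rightarrow> nat \<Rightarrow> nat \<Rightarrow> nat \<Rightarrow> bool" where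
  "is_sup le A a b j \<longleftrightarrow> j \<in> A \<and> le a j \<and> le b j \<and> (\<forall>u\<in>A. le a u \<and> le b u \<longrightarrow> le j u)"

definition is_inf :: "(nat \<Rightarrow> nat \<Rightarrow> bool) \<Rightarrow> nat set \<Rightarrow> nat \<Rightarrow> nat \<Rightarrow> nat \<Rightarrow> bool" where
  "is_inf le A a b m \<longleftrightarrow> m \<in> A \<and> le m a \<and> le m b \<and> (\<forall>u\<in>A. le u a \<and> le u b \<longrightarrow> le u m)"

definition lattice_on :: "nat \<Rightarrow> (nat \<Rightarrow> nat \<Rightarrow> bool) \<Rightarrow> bool" where
  "lattice_on n le \<longleftrightarrow> 0 < n
     \<and> (\<forall>x y. le x y \<longrightarrow> x \<in> carrier_of n \<and> y \<in> carrier_of n)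
     \<and> (\<forall>x\<in>carrier_of n. le x x)
     \<and> (\<forall>x\<in>carrier_of n. \<forall>y\<in>carrier_of n. le x y \<and> le y x \<longrightarrow> x = y)
     \<and> (\<forall>x\<in>carrier_of n. \<forall>y\<in>carrier_of n. \<forall>z\<in>carrier_of n. le x y \<and> le y z \<longrightarrow> le x z)
     \<and> (\<forall>a\<in>carrier_of n. \<forall>b\<in>carrier_of n. \<exists>j. is_sup le (carrier_of n) a b j)
     \<and> (\<forall>a\<in>carrier_of n. \<forall>b\<in>carrier_of n. \<exists>m. is_inf le (carrier_of n) a b m)"

definition covers :: "(nat \<Rightarrow> nat \<Rightarrow> bool) \<Rightarrow> nat set \<Rightarrow> nat \<Rightarrow> nat \<Rightarrow> bool" where
  "covers le A x y \<longleftrightarrow> x \<in> A \<and> y \<in> A \<and> le x y \<and> x \<noteq> y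
     \<and> \<not> (\<exists>z\<in>A. le x z \<and> le z y \<and> z \<noteq> x \<and> z \<noteq> y)"

definition semimodular_on :: "nat \<Rightarrow> (nat \<Rightarrow> nat \<Rightarrow> bool) \<Rightarrow> bool" where
  "semimodular_on n le \<longleftrightarrow>
     (\<forall>a\<in>carrier_of n. \<forall>b\<in>carrier_of n. \<forall>m j.
        is_inf le (carrier_of n) a b m \<and> is_sup le (carrier_of n) a b j \<and> covers le (carrier_of n) m a
        \<longrightarrow> covers le (carrier_of n) b j)"

definition is_top :: "(nat \<Rightarrow> nat \<Rightarrow> bool) \<Rightarrow> nat set \<Rightarrow> nat \<Rightarrow> bool" where
  "is_top le A t \<longleftrightarrow> t \<in> A \<and> (\<forall>y\<in>A. le y t)"

definition is_bot :: "(nat \<Rightarrow> nat \<Rightarrow> bool) \<Rightarrow> nat set \<Rightarrow> nat \<Rightarrow> bool" where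
  "is_bot le A b \<longleftrightarrow> b \<in> A \<and> (\<forall>y\<in>A. le b y)"

definition is_knot :: "nat \<Rightarrow> (nat \<Rightarrow> nat \<Rightarrow> bool) \<Rightarrow> nat \<Rightarrow> bool" where
  "is_knot n le x \<longleftrightarrow> x \<in> carrier_of n \<and> \<not> is_top le (carrier_of n) x \<and> \<not> is_bot le (carrier_of n) x
     \<and> (\<forall>y\<in>carrier_of n. le x y \<or> le y x)"

definition vert_indecomposable :: "nat \<Rightarrow> (nat \<Rightarrow> nat \<Rightarrow> bool) \<Rightarrow> bool" where
  "vert_indecomposable n le \<longleftrightarrow> \<not> (\<exists>x. is_knot n le x)"

definition lat_iso_rel :: "nat \<Rightarrow> ((nat \<Rightarrow> nat \<Rightarrow> bool) \<times> (nat \<Rightarrow> nat \<Rightarrow> bool)) set" where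
  "lat_iso_rel n = {(le1, le2). \<exists>f. bij_betw f (carrier_of n) (carrier_of n)
      \<and> (\<forall>x\<in>carrier_of n. \<forall>y\<in>carrier_of n. le1 x y \<longleftrightarrow> le2 (f x) (f y))}"

definition s_vi :: "nat \<Rightarrow> nat" where
  "s_vi n = card ({le. lattice_on n le \<and> semimodular_on n le \<and> vert_indecomposable n le}
                   // lat_iso_rel n)"

end

theory Submission
  imports Defs "HOL-Library.FuncSet"
begin


definition gle :: "nat \<Rightarrow> nat \<Rightarrow> nat \<Rightarrow> (nat \<Rightarrow> bool) \<Rightarrow> (nat \<Rightarrow> nat \<Rightarrow> bool) \<Rightarrow> nat \<Rightarrow> nat \<Rightarrow> bool" where
  "gle n b t P I x y \<longleftrightarrow> x < n \<and> y < n \<and> (x = y \<or> x = b \<or> y = t \<or>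
      (P x \<and> I x y \<and> y \<noteq> b \<and> y \<noteq> t \<and> \<not> P y))"

locale h3 =
  fixes n b t :: nat and P :: "nat \<Rightarrow> bool" and I :: "nat \<Rightarrow> nat \<Rightarrow> bool"
  assumes bn: "b < n" and tn: "t < n" and bt: "b \<noteq> t"
  and Pn: "\<And>x. P x \<Longrightarrow> x < n \<and> x \<noteq> b \<and> x \<noteq> t"
  and H2: "\<And>l. l < n \<Longrightarrow> l \<noteq> b \<Longrightarrow> l \<noteq> t \<Longrightarrow> \<not> P l \<Longrightarrow> \<exists>p. P p \<and> I p l"
  and H3: "\<And>p q. P p \<Longrightarrow> P q \<Longrightarrow> p \<noteq> q \<Longrightarrow>
              \<exists>!l. l < n \<and> l \<noteq> b \<and> l \<noteq> t \<and> \<not> P l \<and> I p l \<and> I q l"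
  and twoP: "\<exists>p q. P p \<and> P q \<and> p \<noteq> q"
  and twoL: "\<exists>l1 l2. l1 < n \<and> l1 \<noteq> b \<and> l1 \<noteq> t \<and> \<not> P l1 \<and>
                     l2 < n \<and> l2 \<noteq> b \<and> l2 \<noteq> t \<and> \<not> P l2 \<and> l1 \<noteq> l2"
begin

definition L where "L l \<longleftrightarrow> l < n \<and> l \<noteq> b \<and> l \<noteq> t \<and> \<not> P l"

abbreviation le where "le \<equiv> gle n b t P I"

lemma le_iff: "le x y \<longleftrightarrow> x < n \<and> y < n \<and> (x = y \<or> x = b \<or> y = t \<or> (P x \<and> L y \<and> I x y))"
  unfolding gle_def L_def by auto

lemma kinds: "x < n \<Longrightarrow> x = b \<or> x = t \<or> P x \<or> L x"
  unfolding L_def by auto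

lemma Pn': "P x \<Longrightarrow> x < n" "P x \<Longrightarrow> x \<noteq> b" "P x \<Longrightarrow> x \<noteq> t"
  using Pn by auto

lemma L_simps: "L x \<Longrightarrow> x < n" "L x \<Longrightarrow> x \<noteq> b" "L x \<Longrightarrow> x \<noteq> t" "L x \<Longrightarrow> \<not> P x"
  unfolding L_def by auto

lemma H2': "L l \<Longrightarrow> \<exists>p. P p \<and> I p l" using H2 unfolding L_def by auto

lemma H3': "P p \<Longrightarrow> P q \<Longrightarrow> p \<noteq> q \<Longrightarrow> \<exists>!l. L l \<and> I p l \<and> I q l"
  using H3 unfolding L_def by auto

lemma line_ex: "P p \<Longrightarrow> P q \<Longrightarrow> p \<noteq> q \<Longrightarrow> \<exists>l. L l \<and> I p l \<and> I q l"
  using H3' by blast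

lemma line_uniq: "P p \<Longrightarrow> P q \<Longrightarrow> p \<noteq> q \<Longrightarrow> L l \<Longrightarrow> I p l \<Longrightarrow> I q l \<Longrightarrow>
    L l' \<Longrightarrow> I p l' \<Longrightarrow> I q l' \<Longrightarrow> l = l'"
  using H3' by blast

lemma pt_uniq: "L l \<Longrightarrow> L l' \<Longrightarrow> l \<noteq> l' \<Longrightarrow> P p \<Longrightarrow> I p l \<Longrightarrow> I p l' \<Longrightarrow>
   P p' \<Longrightarrow> I p' l \<Longrightarrow> I p' l' \<Longrightarrow> p = p'"
  using line_uniq by blast

lemma every_pt_line: "P p \<Longrightarrow> \<exists>l. L l \<and> I p l"
proof -
  assume p: "P p"
  obtain a c where ac: "P a" "P c" "a \<noteq> c" using twoP by blast
  show ?thesis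
  proof (cases "p = a")
    case True then show ?thesis using line_ex[OF p ac(2)] ac by auto
  next
    case False then show ?thesis using line_ex[OF p ac(1)] by auto
  qed
qed

lemma refl: "x < n \<Longrightarrow> le x x" by (simp add: le_iff)

lemma antisym: "le x y \<Longrightarrow> le y x \<Longrightarrow> x = y"
  unfolding le_iff using bt Pn' L_simps by metis

lemma trans: "le x y \<Longrightarrow> le y z \<Longrightarrow> le x z"
  unfolding le_iff using bt Pn' L_simps by metis

lemma sup_ex: assumes x: "x < n" and y: "y < n" shows "\<exists>j. is_sup le (carrier_of n) x y j"
proof -
  have C: "carrier_of n = {..<n}" by (simp add: carrier_of_def)
  show ?thesis
  proof (cases "le x y")
    case True then show ?thesis unfolding is_sup_def C using x y refl trans by blast
  next
    case nxy: False
    show ?thesis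
    proof (cases "le y x")
      case True then show ?thesis unfolding is_sup_def C using x y refl trans by blast
    next
      case nyx: False
      show ?thesis
      proof (cases "P x \<and> P y")
        case True
        then have "x \<noteq> y" using nxy refl x by auto
        then obtain l where l: "L l" "I x l" "I y l" using line_ex True by blast
        have "is_sup le {..<n} x y l"
          unfolding is_sup_def
        proof (intro conjI ballI impI)
          show "l \<in> {..<n}" using l L_simps by auto
          show "le x l" "le y l" using l True x y L_simps le_iff by auto
          fix u assume u: "u \<in> {..<n}" and "le x u \<and> le y u"
          then have xu: "le x u" and yu: "le y u" by auto
          show "le l u"
          proof (cases "u = t")
            case True then show ?thesis using l L_simps le_iff tn by auto
          next
            case False
            have "u \<noteq> x" using yu nyx by auto
            moreover have "u \<noteq> y" using xu nxy by auto
            ultimately have "L u \<and> I x u \<and> I y u" using xu yu False True Pn' unfolding le_iff by auto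
            then have "u = l" using line_uniq[of x y l u] True \<open>x \<noteq> y\<close> l by auto
            then show ?thesis using refl u by auto
          qed
        qed
        then show ?thesis unfolding C by blast
      next
        case False
        have "is_sup le {..<n} x y t"
          unfolding is_sup_def
        proof (intro conjI ballI impI)
          show "t \<in> {..<n}" using tn by auto
          show "le x t" "le y t" using x y tn le_iff by auto
          fix u assume u: "u \<in> {..<n}" and "le x u \<and> le y u"
          then have xu: "le x u" and yu: "le y u" by auto
          show "le t u"
          proof (rule ccontr)
            assume "\<not> le t u"
            then have ut: "u \<noteq> t" using refl tn by auto
            have "u \<noteq> x" using yu nyx by auto
            moreover have "u \<noteq> y" using xu nxy by auto
            moreover have "x \<noteq> b" "y \<noteq> b" using nxy nyx le_iff x y by auto
            ultimately have "P x \<and> P y" using xu yu ut unfolding le_iff by auto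
            then show False using False by auto
          qed
        qed
        then show ?thesis unfolding C by blast
      qed
    qed
  qed
qed

lemma inf_ex: assumes x: "x < n" and y: "y < n" shows "\<exists>m. is_inf le (carrier_of n) x y m"
proof -
  have C: "carrier_of n = {..<n}" by (simp add: carrier_of_def)
  show ?thesis
  proof (cases "le x y")
    case True then show ?thesis unfolding is_inf_def C using x y refl trans by blast
  next
    case nxy: False
    show ?thesis
    proof (cases "le y x")
      case True then show ?thesis unfolding is_inf_def C using x y refl trans by blast
    next
      case nyx: False
      have xy: "x \<noteq> y" using nxy refl x by auto
      show ?thesis
      proof (cases "\<exists>p. P p \<and> L x \<and> L y \<and> I p x \<and> I p y")
        case True
        then obtain p where p: "P p" "L x" "L y" "I p x" "I p y" by blast
        have "is_inf le {..<n} x y p"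
          unfolding is_inf_def
        proof (intro conjI ballI impI)
          show "p \<in> {..<n}" using p Pn' by auto
          show "le p x" "le p y" using p x y Pn' le_iff by auto
          fix u assume u: "u \<in> {..<n}" and "le u x \<and> le u y"
          then have ux: "le u x" and uy: "le u y" by auto
          show "le u p"
          proof (cases "u = b")
            case True then show ?thesis using le_iff p Pn' bn by auto
          next
            case False
            have "u \<noteq> x" using uy nxy by auto
            moreover have "u \<noteq> y" using ux nyx by auto
            moreover have "x \<noteq> t" "y \<noteq> t" using p L_simps by auto
            ultimately have "P u \<and> I u x \<and> I u y" using ux uy False unfolding le_iff by auto
            then have "u = p" using pt_uniq[of x y u p] p xy by auto
            then show ?thesis using refl u by auto
          qed
        qed
        then show ?thesis unfolding C by blast
      next
        case False
        have "is_inf le {..<n} x y b"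
          unfolding is_inf_def
        proof (intro conjI ballI impI)
          show "b \<in> {..<n}" using bn by auto
          show "le b x" "le b y" using x y bn le_iff by auto
          fix u assume u: "u \<in> {..<n}" and "le u x \<and> le u y"
          then have ux: "le u x" and uy: "le u y" by auto
          show "le u b"
          proof (rule ccontr)
            assume "\<not> le u b"
            then have ub: "u \<noteq> b" using refl bn by auto
            have "u \<noteq> x" using uy nxy by auto
            moreover have "u \<noteq> y" using ux nyx by auto
            moreover have "x \<noteq> t" "y \<noteq> t" using nxy nyx le_iff x y by auto
            ultimately have "P u \<and> L x \<and> L y \<and> I u x \<and> I u y" using ux uy ub unfolding le_iff by auto
            then show False using False by auto
          qed
        qed
        then show ?thesis unfolding C by blast
      qed
    qed
  qed
qed

theorem is_lattice: "lattice_on n le"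
  unfolding lattice_on_def
proof (intro conjI allI impI ballI)
  show "0 < n" using bn by auto
  fix x y assume "le x y" then show "x \<in> carrier_of n" "y \<in> carrier_of n"
    using le_iff carrier_of_def by auto
next
  fix x assume "x \<in> carrier_of n" then show "le x x" using refl carrier_of_def by auto
next
  fix x y assume "le x y \<and> le y x" then show "x = y" using antisym by auto
next
  fix x y z assume "le x y \<and> le y z" then show "le x z" using trans by blast
next
  fix a c assume "a \<in> carrier_of n" "c \<in> carrier_of n"
  then show "\<exists>j. is_sup le (carrier_of n) a c j" using sup_ex carrier_of_def by auto
next
  fix a c assume "a \<in> carrier_of n" "c \<in> carrier_of n"
  then show "\<exists>m. is_inf le (carrier_of n) a c m" using inf_ex carrier_of_def by auto
qed

lemma C_eq: "carrier_of n = {..<n}" by (simp add: carrier_of_def)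

lemma cov_pt_line: assumes p: "P p" and l: "L l" and i: "I p l" shows "covers le (carrier_of n) p l"
proof -
  have "\<not> (\<exists>z<n. le p z \<and> le z l \<and> z \<noteq> p \<and> z \<noteq> l)"
  proof
    assume "\<exists>z<n. le p z \<and> le z l \<and> z \<noteq> p \<and> z \<noteq> l"
    then obtain z where z: "le p z" "le z l" "z \<noteq> p" "z \<noteq> l" by blast
    have "z = t \<or> L z" using z(1) z(3) Pn'[OF p] unfolding le_iff by auto
    then show False
    proof
      assume "z = t" then show False using z(2) l L_simps bt Pn' unfolding le_iff by metis
    next
      assume "L z" then show False using z(2) z(4) l L_simps unfolding le_iff by metis
    qed
  qed
  then show ?thesis unfolding covers_def C_eq using p l i Pn' L_simps le_iff by auto
qed

lemma cov_line_top: "L l \<Longrightarrow> covers le (carrier_of n) l t"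
  unfolding covers_def C_eq le_iff using Pn' L_simps tn by (metis lessThan_iff)

lemma not_cov_bot_line: "L l \<Longrightarrow> \<not> covers le (carrier_of n) b l"
proof
  assume l: "L l" and c: "covers le (carrier_of n) b l"
  obtain p where p: "P p" "I p l" using H2' l by blast
  have "le b p" "le p l" using p l Pn' L_simps le_iff bn by auto
  moreover have "p \<noteq> b" "p \<noteq> l" "p \<in> {..<n}" using p Pn' l L_simps by auto
  ultimately show False using c unfolding covers_def C_eq by blast
qed

theorem is_semimodular: "semimodular_on n le"
  unfolding semimodular_on_def
proof (intro ballI allI impI)
  fix a c m j
  assume a: "a \<in> carrier_of n" and c: "c \<in> carrier_of n"
    and H: "is_inf le (carrier_of n) a c m \<and> is_sup le (carrier_of n) a c j \<and> covers le (carrier_of n) m a"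
  have an: "a < n" and cn: "c < n" using a c C_eq by auto
  have inf: "is_inf le (carrier_of n) a c m" and sup: "is_sup le (carrier_of n) a c j"
    and cov: "covers le (carrier_of n) m a" using H by auto
  have ma: "le m a" "m \<noteq> a" using cov unfolding covers_def by auto
  have mc: "le m c" using inf unfolding is_inf_def by auto
  have ja: "le a j" and jc: "le c j" and jmin: "\<And>u. u < n \<Longrightarrow> le a u \<Longrightarrow> le c u \<Longrightarrow> le j u"
    using sup unfolding is_sup_def C_eq by auto
  have jn: "j < n" using sup unfolding is_sup_def C_eq by auto
  show "covers le (carrier_of n) c j"
  proof (cases "le a c")
    case True
    have "le a m" using inf True refl an unfolding is_inf_def C_eq by auto
    then show ?thesis using ma antisym by auto
  next
    case nac: False
    show ?thesis
    proof (cases "le c a")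
      case True
      have "le c m" using inf True refl cn unfolding is_inf_def C_eq by auto
      then have "m = c" using mc antisym by auto
      moreover have "j = a" using jmin[of a] True refl an ja antisym by auto
      ultimately show ?thesis using cov by simp
    next
      case nca: False
      have ab: "a \<noteq> b" "a \<noteq> t" "c \<noteq> b" "c \<noteq> t" using nac nca le_iff an cn by auto
      have ka: "P a \<or> L a" and kc: "P c \<or> L c" using kinds ab an cn by auto
      have ac: "a \<noteq> c" using nac refl an by auto
      show ?thesis
      proof (cases "P a \<and> P c")
        case True
        then obtain l where l: "L l" "I a l" "I c l" using line_ex ac by blast
        have "le a l" "le c l" using l True le_iff L_simps Pn' by auto
        then have "le j l" using jmin l L_simps by auto
        moreover have "j \<noteq> b" using jc cn ab le_iff bt L_simps(2) by metis
        moreover have "\<not> P j \<or> j = a"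
        proof -
          { assume "P j" then have "j = a" using ja le_iff True Pn' L_simps by auto }
          then show ?thesis by auto
        qed
        moreover have "j \<noteq> a" using jc nca by auto
        ultimately have "j = l" using le_iff L_simps(3)[OF l(1)] by auto
        then show ?thesis using cov_pt_line True l by auto
      next
        case npp: False
        show ?thesis
        proof (cases "L a \<and> P c")
          case True
          have "m = b \<or> m = c" using mc le_iff True L_simps Pn' by metis
          moreover have "m \<noteq> c" using ma nca by auto
          ultimately have "m = b" by auto
          then show ?thesis using cov not_cov_bot_line True by auto
        next
          case False
          then have Lc: "L c" using npp ka kc by auto
          have "j = t"
          proof (rule ccontr)
            assume "j \<noteq> t"
            then have "j = c" using jc le_iff Lc L_simps by auto
            then show False using ja nac by auto
          qed
          then show ?thesis using cov_line_top Lc by auto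
        qed
      qed
    qed
  qed
qed

theorem is_vi: "vert_indecomposable n le"
  unfolding vert_indecomposable_def
proof
  assume "\<exists>x. is_knot n le x"
  then obtain x where k: "is_knot n le x" by blast
  have xn: "x < n" and nt: "\<not> is_top le (carrier_of n) x" and nb: "\<not> is_bot le (carrier_of n) x"
    and cmp: "\<And>y. y < n \<Longrightarrow> le x y \<or> le y x"
    using k unfolding is_knot_def C_eq by auto
  have "x \<noteq> t" using nt tn unfolding is_top_def C_eq le_iff by auto
  moreover have "x \<noteq> b" using nb bn unfolding is_bot_def C_eq le_iff by auto
  ultimately have "P x \<or> L x" using kinds xn by auto
  then show False
  proof
    assume px: "P x"
    obtain q where q: "P q" "q \<noteq> x" using twoP by blast
    show False using cmp[of q] q px Pn' L_simps le_iff by metis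
  next
    assume lx: "L x"
    obtain l where l: "L l" "l \<noteq> x" using twoL unfolding L_def by blast
    show False using cmp[of l] l lx Pn' L_simps le_iff by metis
  qed
qed

end



datatype el = Bot | Top | PX nat | PY nat | PZ nat | LX | LY | LZ
  | T nat nat | XY nat nat | YZ nat nat | Pad nat

fun vel :: "nat \<Rightarrow> nat \<Rightarrow> nat \<Rightarrow> el \<Rightarrow> bool" where
  "vel q m p Bot = True"
| "vel q m p Top = True"
| "vel q m p (PX i) = (i < q)"
| "vel q m p (PY j) = (j < m)"
| "vel q m p (PZ k) = (k < q)"
| "vel q m p LX = True"
| "vel q m p LY = True"
| "vel q m p LZ = True"
| "vel q m p (T i k) = (i < q \<and> k < q)"
| "vel q m p (XY i j) = (i < q \<and> j < m)"
| "vel q m p (YZ j k) = (j < m \<and> k < q)"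
| "vel q m p (Pad l) = (l < p)"

fun ispt :: "el \<Rightarrow> bool" where
  "ispt (PX i) = True"
| "ispt (PY j) = True"
| "ispt (PZ k) = True"
| "ispt _ = False"

definition isln :: "el \<Rightarrow> bool" where
  "isln e \<longleftrightarrow> e \<noteq> Bot \<and> e \<noteq> Top \<and> \<not> ispt e"

fun inc :: "(nat \<Rightarrow> nat \<Rightarrow> nat) \<Rightarrow> nat \<Rightarrow> el \<Rightarrow> el \<Rightarrow> bool" where
  "inc c q (PX i) LX = True"
| "inc c q (PY j) LY = True"
| "inc c q (PZ k) LZ = True"
| "inc c q (PX i) (T i' k) = (i = i')"
| "inc c q (PY j) (T i k) = (j = c i k)"
| "inc c q (PZ k) (T i k') = (k = k')"
| "inc c q (PX i) (XY i' j) = (i = i')"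
| "inc c q (PY j) (XY i j') = (j = j' \<and> (\<forall>k<q. c i k \<noteq> j))"
| "inc c q (PY j) (YZ j' k) = (j = j' \<and> (\<forall>i<q. c i k \<noteq> j))"
| "inc c q (PZ k) (YZ j k') = (k = k')"
| "inc c q (PX i) (Pad l) = (i = 0)"
| "inc c q _ _ = False"

definition cv :: "nat \<Rightarrow> nat \<Rightarrow> (nat \<Rightarrow> nat \<Rightarrow> nat) \<Rightarrow> bool" where
  "cv q m c \<longleftrightarrow> (\<forall>i<q. \<forall>k<q. c i k < m) \<and> (\<forall>i<q. inj_on (c i) {..<q})
      \<and> (\<forall>k<q. inj_on (\<lambda>i. c i k) {..<q})"

lemma incPX: "inc c q (PX i) e \<Longrightarrow> e = LX \<or> (\<exists>k. e = T i k) \<or> (\<exists>j. e = XY i j) \<or> (\<exists>l. e = Pad l \<and> i = 0)"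
  by (cases e) auto
lemma incPY: "inc c q (PY j) e \<Longrightarrow> e = LY \<or> (\<exists>i k. e = T i k \<and> j = c i k) \<or>
   (\<exists>i. e = XY i j \<and> (\<forall>k<q. c i k \<noteq> j)) \<or> (\<exists>k. e = YZ j k \<and> (\<forall>i<q. c i k \<noteq> j))"
  by (cases e) auto
lemma incPZ: "inc c q (PZ k) e \<Longrightarrow> e = LZ \<or> (\<exists>i. e = T i k) \<or> (\<exists>j. e = YZ j k)"
  by (cases e) auto

lemma ispt_cases: "ispt e \<Longrightarrow> (\<exists>i. e = PX i) \<or> (\<exists>j. e = PY j) \<or> (\<exists>k. e = PZ k)"
  by (cases e) auto

lemma H3_uniq:
  assumes c: "cv q m c" and v1: "vel q m p e1" and v2: "vel q m p e2"
    and p1: "ispt e1" and p2: "ispt e2" and ne: "e1 \<noteq> e2"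
    and a: "vel q m p e" "inc c q e1 e" "inc c q e2 e"
    and b: "vel q m p e'" "inc c q e1 e'" "inc c q e2 e'"
  shows "e = e'"
proof -
  have ri: "\<And>i k k'. i<q \<Longrightarrow> k<q \<Longrightarrow> k'<q \<Longrightarrow> c i k = c i k' \<Longrightarrow> k = k'"
    using c unfolding cv_def inj_on_def by auto
  have ci: "\<And>i i' k. i<q \<Longrightarrow> i'<q \<Longrightarrow> k<q \<Longrightarrow> c i k = c i' k \<Longrightarrow> i = i'"
    using c unfolding cv_def inj_on_def by auto
  from p1 p2 show ?thesis
    using ispt_cases[OF p1] ispt_cases[OF p2]
  proof (elim disjE exE)
    fix i i' assume "e1 = PX i" "e2 = PX i'"
    then show ?thesis using a b ne incPX[of c q i e] incPX[of c q i' e] incPX[of c q i e'] by auto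
  next
    fix i j assume "e1 = PX i" "e2 = PY j"
    then show ?thesis using a b ne incPX[of c q i e] incPX[of c q i e'] ri by auto
  next
    fix i k assume "e1 = PX i" "e2 = PZ k"
    then show ?thesis using a b ne incPX[of c q i e] incPX[of c q i e'] by auto
  next
    fix i j assume "e1 = PY j" "e2 = PX i"
    then show ?thesis using a b ne incPX[of c q i e] incPX[of c q i e'] ri by auto
  next
    fix j j' assume "e1 = PY j" "e2 = PY j'"
    then show ?thesis using a b ne incPY[of c q j e] incPY[of c q j' e] incPY[of c q j e'] incPY[of c q j' e'] by auto
  next
    fix j k assume "e1 = PY j" "e2 = PZ k"
    then show ?thesis using a b ne incPZ[of c q k e] incPZ[of c q k e'] ci by auto
  next
    fix i k assume "e1 = PZ k" "e2 = PX i"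
    then show ?thesis using a b ne incPX[of c q i e] incPX[of c q i e'] by auto
  next
    fix j k assume "e1 = PZ k" "e2 = PY j"
    then show ?thesis using a b ne incPZ[of c q k e] incPZ[of c q k e'] ci by auto
  next
    fix k k' assume "e1 = PZ k" "e2 = PZ k'"
    then show ?thesis using a b ne incPZ[of c q k e] incPZ[of c q k' e] incPZ[of c q k e'] by auto
  qed
qed

lemma H3_ex:
  assumes c: "cv q m c" and v1: "vel q m p e1" and v2: "vel q m p e2"
    and p1: "ispt e1" and p2: "ispt e2" and ne: "e1 \<noteq> e2"
  shows "\<exists>e. vel q m p e \<and> isln e \<and> inc c q e1 e \<and> inc c q e2 e"
proof -
  have cm: "\<And>i k. i<q \<Longrightarrow> k<q \<Longrightarrow> c i k < m" using c unfolding cv_def by auto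
  from p1 p2 show ?thesis
    using ispt_cases[OF p1] ispt_cases[OF p2]
  proof (elim disjE exE)
    fix i i' assume "e1 = PX i" "e2 = PX i'"
    then show ?thesis by (intro exI[of _ LX]) (auto simp: isln_def)
  next
    fix i j assume e: "e1 = PX i" "e2 = PY j"
    show ?thesis
    proof (cases "\<exists>k<q. c i k = j")
      case True then obtain k where "k<q" "c i k = j" by auto
      then show ?thesis using e v1 by (intro exI[of _ "T i k"]) (auto simp: isln_def)
    next
      case False then show ?thesis using e v1 v2 by (intro exI[of _ "XY i j"]) (auto simp: isln_def)
    qed
  next
    fix i k assume "e1 = PX i" "e2 = PZ k"
    then show ?thesis using v1 v2 by (intro exI[of _ "T i k"]) (auto simp: isln_def)
  next
    fix i j assume e: "e1 = PY j" "e2 = PX i"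
    show ?thesis
    proof (cases "\<exists>k<q. c i k = j")
      case True then obtain k where "k<q" "c i k = j" by auto
      then show ?thesis using e v2 by (intro exI[of _ "T i k"]) (auto simp: isln_def)
    next
      case False then show ?thesis using e v1 v2 by (intro exI[of _ "XY i j"]) (auto simp: isln_def)
    qed
  next
    fix j j' assume "e1 = PY j" "e2 = PY j'"
    then show ?thesis by (intro exI[of _ LY]) (auto simp: isln_def)
  next
    fix j k assume e: "e1 = PY j" "e2 = PZ k"
    show ?thesis
    proof (cases "\<exists>i<q. c i k = j")
      case True then obtain i where "i<q" "c i k = j" by auto
      then show ?thesis using e v2 by (intro exI[of _ "T i k"]) (auto simp: isln_def)
    next
      case False then show ?thesis using e v1 v2 by (intro exI[of _ "YZ j k"]) (auto simp: isln_def)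
    qed
  next
    fix i k assume "e1 = PZ k" "e2 = PX i"
    then show ?thesis using v1 v2 by (intro exI[of _ "T i k"]) (auto simp: isln_def)
  next
    fix j k assume e: "e1 = PZ k" "e2 = PY j"
    show ?thesis
    proof (cases "\<exists>i<q. c i k = j")
      case True then obtain i where "i<q" "c i k = j" by auto
      then show ?thesis using e v1 by (intro exI[of _ "T i k"]) (auto simp: isln_def)
    next
      case False then show ?thesis using e v1 v2 by (intro exI[of _ "YZ j k"]) (auto simp: isln_def)
    qed
  next
    fix k k' assume "e1 = PZ k" "e2 = PZ k'"
    then show ?thesis by (intro exI[of _ LZ]) (auto simp: isln_def)
  qed
qed

lemma H2_el: assumes "vel q m p e" "isln e" "0 < q" "0 < m"
  shows "\<exists>e'. vel q m p e' \<and> ispt e' \<and> inc c q e' e"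
  using assms
proof (cases e)
  case LX then show ?thesis using assms by (intro exI[of _ "PX 0"]) auto
next
  case LY then show ?thesis using assms by (intro exI[of _ "PY 0"]) auto
next
  case LZ then show ?thesis using assms by (intro exI[of _ "PZ 0"]) auto
next
  case (T i k) then show ?thesis using assms by (intro exI[of _ "PX i"]) auto
next
  case (XY i j) then show ?thesis using assms by (intro exI[of _ "PX i"]) auto
next
  case (YZ j k) then show ?thesis using assms by (intro exI[of _ "PZ k"]) auto
next
  case (Pad l) then show ?thesis using assms by (intro exI[of _ "PX 0"]) auto
qed (auto simp: isln_def)

definition es :: "nat \<Rightarrow> nat \<Rightarrow> nat \<Rightarrow> el list" where
  "es q m p = [Bot] @ map PX [0..<q] @ map PY [0..<m] @ map PZ [0..<q] @ [LX, LY, LZ]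
     @ map (\<lambda>(i,k). T i k) (List.product [0..<q] [0..<q])
     @ map (\<lambda>(i,j). XY i j) (List.product [0..<q] [0..<m])
     @ map (\<lambda>(j,k). YZ j k) (List.product [0..<m] [0..<q])
     @ map Pad [0..<p] @ [Top]"

lemma set_es: "set (es q m p) = {e. vel q m p e}"
proof (intro set_eqI iffI)
  fix e assume "e \<in> set (es q m p)" then show "e \<in> {e. vel q m p e}" by (auto simp: es_def)
next
  fix e assume "e \<in> {e. vel q m p e}" then show "e \<in> set (es q m p)"
    by (cases e) (auto simp: es_def image_iff)
qed

lemma distinct_es: "distinct (es q m p)"
  unfolding es_def by (auto simp: distinct_map inj_on_def distinct_product)

lemma length_es: "length (es q m p) = 5 + 2*q + m + q*q + q*m + m*q + p"
  unfolding es_def by (simp add: length_product)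

lemma es0: "es q m p ! 0 = Bot" unfolding es_def by simp

lemma es_last: "es q m p ! (length (es q m p) - 1) = Top"
  unfolding es_def by (simp add: nth_append last_conv_nth[symmetric])

definition NN :: "nat \<Rightarrow> nat \<Rightarrow> nat \<Rightarrow> nat" where "NN q m p = length (es q m p)"
definition PP :: "nat \<Rightarrow> nat \<Rightarrow> nat \<Rightarrow> nat \<Rightarrow> bool" where
  "PP q m p x \<longleftrightarrow> x < NN q m p \<and> ispt (es q m p ! x)"
definition II :: "(nat \<Rightarrow> nat \<Rightarrow> nat) \<Rightarrow> nat \<Rightarrow> nat \<Rightarrow> nat \<Rightarrow> nat \<Rightarrow> nat \<Rightarrow> bool" where
  "II c q m p x y \<longleftrightarrow> inc c q (es q m p ! x) (es q m p ! y)"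
definition leC :: "(nat \<Rightarrow> nat \<Rightarrow> nat) \<Rightarrow> nat \<Rightarrow> nat \<Rightarrow> nat \<Rightarrow> nat \<Rightarrow> nat \<Rightarrow> bool" where
  "leC c q m p = gle (NN q m p) 0 (NN q m p - 1) (PP q m p) (II c q m p)"

lemma es_vel: "x < NN q m p \<Longrightarrow> vel q m p (es q m p ! x)"
  using set_es[of q m p] nth_mem[of x "es q m p"] unfolding NN_def by auto

lemma es_idx: "vel q m p e \<Longrightarrow> \<exists>x < NN q m p. es q m p ! x = e"
  using set_es[of q m p] unfolding NN_def by (metis in_set_conv_nth mem_Collect_eq)

lemma es_inj: "x < NN q m p \<Longrightarrow> y < NN q m p \<Longrightarrow> es q m p ! x = es q m p ! y \<Longrightarrow> x = y"
  using distinct_es[of q m p] unfolding NN_def by (simp add: nth_eq_iff_index_eq)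

lemma NN_ge: "NN q m p \<ge> 5" unfolding NN_def length_es by simp

lemma es_N1: "es q m p ! (NN q m p - 1) = Top" unfolding NN_def by (rule es_last)

lemma h3_inst: assumes c: "cv q m c" and q: "0 < q" and m: "0 < m"
  shows "h3 (NN q m p) 0 (NN q m p - 1) (PP q m p) (II c q m p)"
proof -
  let ?N = "NN q m p" and ?e = "es q m p"
  have N5: "?N \<ge> 5" by (rule NN_ge)
  have e0: "?e ! 0 = Bot" by (rule es0)
  have eN: "?e ! (?N - 1) = Top" by (rule es_N1)
  have nb: "\<And>x. x < ?N \<Longrightarrow> x \<noteq> 0 \<Longrightarrow> ?e ! x \<noteq> Bot"
    using es_inj[of _ q m p 0] e0 N5 by (metis less_le_trans zero_less_numeral)
  have nt: "\<And>x. x < ?N \<Longrightarrow> x \<noteq> ?N - 1 \<Longrightarrow> ?e ! x \<noteq> Top"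
    using es_inj[of _ q m p "?N - 1"] eN N5 by (metis diff_less zero_less_one less_le_trans zero_less_numeral)
  show ?thesis
  proof
    show "0 < ?N" "?N - 1 < ?N" "0 \<noteq> ?N - 1" using N5 by auto
  next
    fix x assume "PP q m p x"
    then show "x < ?N \<and> x \<noteq> 0 \<and> x \<noteq> ?N - 1" unfolding PP_def using e0 eN by (metis ispt.simps(4) ispt.simps(5))
  next
    fix l assume l: "l < ?N" "l \<noteq> 0" "l \<noteq> ?N - 1" "\<not> PP q m p l"
    have "isln (?e ! l)" using l nb nt unfolding isln_def PP_def by auto
    then obtain e' where e': "vel q m p e'" "ispt e'" "inc c q e' (?e ! l)"
      using H2_el[of q m p "?e ! l" c] es_vel[OF l(1)] q m by auto
    obtain x where "x < ?N" "?e ! x = e'" using es_idx[OF e'(1)] by auto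
    then show "\<exists>p'. PP q m p p' \<and> II c q m p p' l" using e' unfolding PP_def II_def by auto
  next
    fix x y assume x: "PP q m p x" and y: "PP q m p y" and xy: "x \<noteq> y"
    have xn: "x < ?N" and yn: "y < ?N" using x y unfolding PP_def by auto
    have ne: "?e ! x \<noteq> ?e ! y" using es_inj xn yn xy by auto
    obtain e where e: "vel q m p e" "isln e" "inc c q (?e ! x) e" "inc c q (?e ! y) e"
      using H3_ex[OF c es_vel[OF xn] es_vel[OF yn] _ _ ne] x y unfolding PP_def by auto
    obtain l where l: "l < ?N" "?e ! l = e" using es_idx[OF e(1)] by auto
    show "\<exists>!l. l < ?N \<and> l \<noteq> 0 \<and> l \<noteq> ?N - 1 \<and> \<not> PP q m p l \<and> II c q m p x l \<and> II c q m p y l"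
    proof (rule ex1I[of _ l])
      show "l < ?N \<and> l \<noteq> 0 \<and> l \<noteq> ?N - 1 \<and> \<not> PP q m p l \<and> II c q m p x l \<and> II c q m p y l"
      proof -
        have "l \<noteq> 0" using l e e0 unfolding isln_def by (metis)
        moreover have "l \<noteq> ?N - 1" using l e eN unfolding isln_def by (metis)
        ultimately show ?thesis using l e unfolding II_def PP_def isln_def by auto
      qed
    next
      fix l' assume l': "l' < ?N \<and> l' \<noteq> 0 \<and> l' \<noteq> ?N - 1 \<and> \<not> PP q m p l' \<and> II c q m p x l' \<and> II c q m p y l'"
      have "?e ! l' = e"
        using H3_uniq[OF c es_vel[OF xn] es_vel[OF yn] _ _ ne es_vel[of l' q m p] _ _ e(1) e(3) e(4)]
          x y l' unfolding PP_def II_def by auto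
      then show "l' = l" using es_inj l l' by auto
    qed
  next
    obtain x y where "x < ?N" "?e ! x = PX 0" "y < ?N" "?e ! y = PY 0"
      using es_idx[of q m p "PX 0"] es_idx[of q m p "PY 0"] q m by auto
    then show "\<exists>p' q'. PP q m p p' \<and> PP q m p q' \<and> p' \<noteq> q'" unfolding PP_def by force
  next
    obtain x y where "x < ?N" "?e ! x = LX" "y < ?N" "?e ! y = LY"
      using es_idx[of q m p LX] es_idx[of q m p LY] by auto
    then show "\<exists>l1 l2. l1 < ?N \<and> l1 \<noteq> 0 \<and> l1 \<noteq> ?N - 1 \<and> \<not> PP q m p l1 \<and>
                     l2 < ?N \<and> l2 \<noteq> 0 \<and> l2 \<noteq> ?N - 1 \<and> \<not> PP q m p l2 \<and> l1 \<noteq> l2"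
      using e0 eN unfolding PP_def by (metis el.distinct ispt.simps)
  qed
qed

theorem leC_good: assumes "cv q m c" "0 < q" "0 < m"
  shows "lattice_on (NN q m p) (leC c q m p) \<and> semimodular_on (NN q m p) (leC c q m p)
     \<and> vert_indecomposable (NN q m p) (leC c q m p)"
proof -
  interpret h3 "NN q m p" 0 "NN q m p - 1" "PP q m p" "II c q m p" using h3_inst assms .
  show ?thesis unfolding leC_def using is_lattice is_semimodular is_vi by auto
qed




lemma card_ext:
  assumes G: "finite G" and X: "\<And>g. g \<in> G \<Longrightarrow> finite (X g) \<and> card (X g) \<ge> N"
    and inj: "inj_on F (Sigma G X)" and sub: "F ` Sigma G X \<subseteq> Tg" and Tg: "finite Tg"
  shows "card G * N \<le> card Tg"
proof -
  have "card G * N = (\<Sum>g\<in>G. N)" by simp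
  also have "\<dots> \<le> (\<Sum>g\<in>G. card (X g))" using X by (intro sum_mono) auto
  also have "\<dots> = card (Sigma G X)" using G X by (simp add: card_SigmaI)
  also have "\<dots> = card (F ` Sigma G X)" using inj by (simp add: card_image)
  also have "\<dots> \<le> card Tg" using sub Tg by (simp add: card_mono)
  finally show ?thesis .
qed

lemma count_inj:
  assumes "\<forall>k<s. A k \<subseteq> {..<m::nat}" "\<forall>k<s. card (A k) \<ge> N + s"
  shows "N ^ s \<le> card {g \<in> {..<s} \<rightarrow>\<^sub>E {..<m}. inj_on g {..<s} \<and> (\<forall>k<s. g k \<in> A k)}"
  using assms
proof (induction s)
  case 0
  have "{g \<in> {..<0::nat} \<rightarrow>\<^sub>E {..<m}. inj_on g {..<0} \<and> (\<forall>k<0. g k \<in> A k)} = {\<lambda>_. undefined}"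
    by auto
  then show ?case by simp
next
  case (Suc s)
  define G where "G = {g \<in> {..<s} \<rightarrow>\<^sub>E {..<m}. inj_on g {..<s} \<and> (\<forall>k<s. g k \<in> A k)}"
  define Tg where "Tg = {g \<in> {..<Suc s} \<rightarrow>\<^sub>E {..<m}. inj_on g {..<Suc s} \<and> (\<forall>k<Suc s. g k \<in> A k)}"
  have p1: "\<forall>k<s. A k \<subseteq> {..<m}" "\<forall>k<s. N + s \<le> card (A k)" using Suc.prems by (auto, meson Suc_leD less_SucI)
  have IH: "N ^ s \<le> card G" unfolding G_def using Suc.IH[OF p1] by simp
  have fG: "finite G" unfolding G_def by (rule finite_subset[of _ "{..<s} \<rightarrow>\<^sub>E {..<m}"]) (auto intro!: finite_PiE)
  have fTg: "finite Tg" unfolding Tg_def by (rule finite_subset[of _ "{..<Suc s} \<rightarrow>\<^sub>E {..<m}"]) (auto intro!: finite_PiE)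
  let ?X = "\<lambda>g. A s - g ` {..<s}"
  have X: "finite (?X g) \<and> card (?X g) \<ge> N" if "g \<in> G" for g
  proof
    have As: "A s \<subseteq> {..<m}" using Suc.prems by auto
    then show "finite (?X g)" by (meson finite_Diff finite_lessThan finite_subset)
    have "card (A s) \<ge> N + Suc s" using Suc.prems by auto
    moreover have "card (g ` {..<s}) \<le> s" using card_image_le[of "{..<s}" g] by auto
    moreover have "card (A s) - card (g ` {..<s}) \<le> card (?X g)"
      using diff_card_le_card_Diff[of "g ` {..<s}" "A s"] by auto
    ultimately show "card (?X g) \<ge> N" by linarith
  qed
  have inj: "inj_on (\<lambda>(g, x). g(s := x)) (Sigma G ?X)"
  proof (rule inj_onI, clarsimp)
    fix g x g' x'
    assume g: "g \<in> G" "x \<in> A s" "x \<notin> g ` {..<s}" and g': "g' \<in> G" "x' \<in> A s" "x' \<notin> g' ` {..<s}"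
      and e: "g(s := x) = g'(s := x')"
    have "x = x'" using fun_cong[OF e, of s] by simp
    moreover have "g = g'"
    proof
      fix k show "g k = g' k"
      proof (cases "k < s")
        case True then show ?thesis using fun_cong[OF e, of k] by simp
      next
        case False then show ?thesis using g(1) g'(1) unfolding G_def by (auto simp: PiE_def extensional_def)
      qed
    qed
    ultimately show "g = g' \<and> x = x'" by simp
  qed
  have sub: "(\<lambda>(g, x). g(s := x)) ` Sigma G ?X \<subseteq> Tg"
  proof clarsimp
    fix g x assume g: "g \<in> G" "x \<in> A s" "x \<notin> g ` {..<s}"
    have gp: "g \<in> {..<s} \<rightarrow>\<^sub>E {..<m}" "inj_on g {..<s}" "\<forall>k<s. g k \<in> A k" using g unfolding G_def by auto
    have xm: "x < m" using g Suc.prems by auto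
    show "g(s := x) \<in> Tg" unfolding Tg_def
    proof (intro CollectI conjI allI impI)
      show "g(s := x) \<in> {..<Suc s} \<rightarrow>\<^sub>E {..<m}" using gp xm by (auto simp: PiE_def extensional_def Pi_def)
      show "inj_on (g(s := x)) {..<Suc s}" using gp g(3) lessThan_Suc by (auto simp: inj_on_def)
      fix k assume "k < Suc s" then show "(g(s := x)) k \<in> A k" using gp g by (cases "k = s") auto
    qed
  qed
  have "card G * N \<le> card Tg" using card_ext[OF fG X inj sub fTg] by auto
  then have "N ^ s * N \<le> card Tg" using IH by (meson le_trans mult_le_mono1)
  then show ?case unfolding Tg_def by (simp add: mult.commute)
qed

definition VV :: "nat \<Rightarrow> nat \<Rightarrow> nat \<Rightarrow> (nat \<Rightarrow> nat \<Rightarrow> nat) set" where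
  "VV q m r = {c \<in> {..<r} \<rightarrow>\<^sub>E ({..<q} \<rightarrow>\<^sub>E {..<m}). (\<forall>i<r. inj_on (c i) {..<q})
       \<and> (\<forall>k<q. inj_on (\<lambda>i. c i k) {..<r})}"

lemma finite_VV: "finite (VV q m r)"
  unfolding VV_def by (rule finite_subset[of _ "{..<r} \<rightarrow>\<^sub>E ({..<q} \<rightarrow>\<^sub>E {..<m})"]) (auto intro!: finite_PiE)

lemma count_VV: assumes "r \<le> q" "3 * q \<le> m" shows "(q ^ q) ^ r \<le> card (VV q m r)"
  using assms
proof (induction r)
  case 0
  have "VV q m 0 = {\<lambda>_. undefined}" unfolding VV_def by auto
  then show ?case by simp
next
  case (Suc r)
  define G where "G = VV q m r"
  have IH: "(q ^ q) ^ r \<le> card G" unfolding G_def using Suc by auto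
  let ?A = "\<lambda>c k. {..<m} - (\<lambda>i. c i k) ` {..<r}"
  let ?X = "\<lambda>c. {g \<in> {..<q} \<rightarrow>\<^sub>E {..<m}. inj_on g {..<q} \<and> (\<forall>k<q. g k \<in> ?A c k)}"
  have X: "finite (?X c) \<and> card (?X c) \<ge> q ^ q" if "c \<in> G" for c
  proof
    show "finite (?X c)" by (rule finite_subset[of _ "{..<q} \<rightarrow>\<^sub>E {..<m}"]) (auto intro!: finite_PiE)
    have "\<forall>k<q. card (?A c k) \<ge> q + q"
    proof (intro allI impI)
      fix k assume "k < q"
      have "card ((\<lambda>i. c i k) ` {..<r}) \<le> r" using card_image_le[of "{..<r}"] by auto
      moreover have "card {..<m} - card ((\<lambda>i. c i k) ` {..<r}) \<le> card (?A c k)"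
        using diff_card_le_card_Diff[of "(\<lambda>i. c i k) ` {..<r}" "{..<m}"] by auto
      ultimately show "card (?A c k) \<ge> q + q" using Suc.prems by auto
    qed
    then show "card (?X c) \<ge> q ^ q" using count_inj[of q "?A c" m q] by auto
  qed
  have inj: "inj_on (\<lambda>(c, g). c(r := g)) (Sigma G ?X)"
  proof (rule inj_onI, clarsimp)
    fix c g c' g'
    assume c: "c \<in> G" and c': "c' \<in> G" and e: "c(r := g) = c'(r := g')"
    have "g = g'" using fun_cong[OF e, of r] by simp
    moreover have "c = c'"
    proof
      fix i show "c i = c' i"
      proof (cases "i < r")
        case True then show ?thesis using fun_cong[OF e, of i] by simp
      next
        case False then show ?thesis using c c' unfolding G_def VV_def by (auto simp: PiE_def extensional_def)
      qed
    qed
    ultimately show "c = c' \<and> g = g'" by simp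
  qed
  have sub: "(\<lambda>(c, g). c(r := g)) ` Sigma G ?X \<subseteq> VV q m (Suc r)"
  proof clarsimp
    fix c g assume c: "c \<in> G" and g: "g \<in> {..<q} \<rightarrow>\<^sub>E {..<m}" "inj_on g {..<q}"
      "\<forall>k<q. g k < m \<and> g k \<notin> (\<lambda>i. c i k) ` {..<r}"
    have cp: "c \<in> {..<r} \<rightarrow>\<^sub>E ({..<q} \<rightarrow>\<^sub>E {..<m})" "\<forall>i<r. inj_on (c i) {..<q}"
      "\<forall>k<q. inj_on (\<lambda>i. c i k) {..<r}" using c unfolding G_def VV_def by auto
    show "c(r := g) \<in> VV q m (Suc r)" unfolding VV_def
    proof (intro CollectI conjI allI impI)
      show "c(r := g) \<in> {..<Suc r} \<rightarrow>\<^sub>E ({..<q} \<rightarrow>\<^sub>E {..<m})"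
        using cp(1) g(1) by (auto simp: PiE_def extensional_def Pi_def)
      fix i assume "i < Suc r" then show "inj_on ((c(r := g)) i) {..<q}" using cp g by (cases "i = r") auto
    next
      fix k assume k: "k < q"
      show "inj_on (\<lambda>i. (c(r := g)) i k) {..<Suc r}"
        using cp(3) k g(3) lessThan_Suc unfolding inj_on_def by (auto, (metis image_eqI lessThan_iff)+)
    qed
  qed
  have "card G * q ^ q \<le> card (VV q m (Suc r))"
    using card_ext[OF _ X inj sub finite_VV] finite_VV unfolding G_def by auto
  then have "(q ^ q) ^ r * q ^ q \<le> card (VV q m (Suc r))" using IH by (meson le_trans mult_le_mono1)
  then show ?case by (simp add: mult.commute)
qed

lemma VV_cv: "c \<in> VV q m q \<Longrightarrow> cv q m c"
  unfolding VV_def cv_def by (auto simp: PiE_def Pi_def)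




definition lab :: "nat \<Rightarrow> nat \<Rightarrow> nat \<Rightarrow> el \<Rightarrow> nat" where
  "lab q m p e = (SOME x. x < NN q m p \<and> es q m p ! x = e)"

lemma lab: "vel q m p e \<Longrightarrow> lab q m p e < NN q m p \<and> es q m p ! lab q m p e = e"
  unfolding lab_def using es_idx[of q m p e] by (rule someI_ex)

definition twoub :: "(nat \<Rightarrow> nat \<Rightarrow> bool) \<Rightarrow> nat \<Rightarrow> nat \<Rightarrow> nat \<Rightarrow> bool" where
  "twoub le a b d \<longleftrightarrow> (\<exists>w1 w2. w1 \<noteq> w2 \<and> le a w1 \<and> le b w1 \<and> le d w1 \<and> le a w2 \<and> le b w2 \<and> le d w2)"

lemma inc3: "inc c q (PX i) e \<and> inc c q (PY j) e \<and> inc c q (PZ k) e \<longleftrightarrow> e = T i k \<and> j = c i k"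
  by (cases e) auto

lemma ub3:
  fixes c :: "nat \<Rightarrow> nat \<Rightarrow> nat" and p q m i j k w :: nat
  assumes i: "i < q" and k: "k < q" and j: "j < m"
  defines "x \<equiv> lab q m p (PX i)" and "y \<equiv> lab q m p (PY j)" and "z \<equiv> lab q m p (PZ k)"
  shows "leC c q m p x w \<and> leC c q m p y w \<and> leC c q m p z w \<longleftrightarrow>
    w = NN q m p - 1 \<or> (w < NN q m p \<and> es q m p ! w = T i k \<and> j = c i k)"
proof -
  let ?N = "NN q m p" and ?e = "es q m p"
  have lx: "x < ?N" "?e ! x = PX i" using lab[of q m p "PX i"] i unfolding x_def by auto
  have ly: "y < ?N" "?e ! y = PY j" using lab[of q m p "PY j"] j unfolding y_def by auto
  have lz: "z < ?N" "?e ! z = PZ k" using lab[of q m p "PZ k"] k unfolding z_def by auto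
  have e0: "?e ! 0 = Bot" by (rule es0)
  have eN: "?e ! (?N - 1) = Top" by (rule es_N1)
  have N5: "?N \<ge> 5" by (rule NN_ge)
  have ne0: "x \<noteq> 0" "y \<noteq> 0" "z \<noteq> 0" using lx ly lz e0 by (metis el.distinct)+
  have neN: "x \<noteq> ?N - 1" "y \<noteq> ?N - 1" "z \<noteq> ?N - 1" using lx ly lz eN by auto
  have dxy: "x \<noteq> y" "x \<noteq> z" "y \<noteq> z" using lx ly lz by auto
  have Px: "PP q m p x" "PP q m p y" "PP q m p z" using lx ly lz unfolding PP_def by auto
  show ?thesis
  proof
    assume H: "leC c q m p x w \<and> leC c q m p y w \<and> leC c q m p z w"
    show "w = ?N - 1 \<or> (w < ?N \<and> ?e ! w = T i k \<and> j = c i k)"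
    proof (cases "w = ?N - 1")
      case True then show ?thesis by simp
    next
      case False
      have wn: "w < ?N" using H unfolding leC_def gle_def by auto
      have "\<not> (x = w \<or> y = w \<or> z = w)"
      proof
        assume "x = w \<or> y = w \<or> z = w"
        then show False using H ne0 neN dxy Px False unfolding leC_def gle_def by auto
      qed
      then have "II c q m p x w \<and> II c q m p y w \<and> II c q m p z w"
        using H ne0 False unfolding leC_def gle_def by auto
      then have "inc c q (PX i) (?e ! w) \<and> inc c q (PY j) (?e ! w) \<and> inc c q (PZ k) (?e ! w)"
        unfolding II_def using lx ly lz by auto
      then show ?thesis using inc3 wn by blast
    qed
  next
    assume H: "w = ?N - 1 \<or> (w < ?N \<and> ?e ! w = T i k \<and> j = c i k)"
    then show "leC c q m p x w \<and> leC c q m p y w \<and> leC c q m p z w"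
    proof
      assume "w = ?N - 1" then show ?thesis using lx ly lz N5 unfolding leC_def gle_def by auto
    next
      assume w: "w < ?N \<and> ?e ! w = T i k \<and> j = c i k"
      have "w \<noteq> 0" "w \<noteq> ?N - 1" "\<not> PP q m p w" using w e0 eN unfolding PP_def by (metis el.distinct ispt.simps)+
      then show ?thesis using w lx ly lz Px unfolding leC_def gle_def II_def by auto
    qed
  qed
qed

lemma twoub3:
  assumes i: "i < q" and k: "k < q" and j: "j < m"
  shows "twoub (leC c q m p) (lab q m p (PX i)) (lab q m p (PY j)) (lab q m p (PZ k)) \<longleftrightarrow> j = c i k"
proof -
  let ?N = "NN q m p" and ?e = "es q m p"
  note U = ub3[OF i k j, of c p]
  show ?thesis
  proof
    assume "twoub (leC c q m p) (lab q m p (PX i)) (lab q m p (PY j)) (lab q m p (PZ k))"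
    then obtain w1 w2 where "w1 \<noteq> w2"
      "w1 = ?N - 1 \<or> (w1 < ?N \<and> ?e ! w1 = T i k \<and> j = c i k)"
      "w2 = ?N - 1 \<or> (w2 < ?N \<and> ?e ! w2 = T i k \<and> j = c i k)"
      unfolding twoub_def using U by metis
    then show "j = c i k" by auto
  next
    assume jc: "j = c i k"
    obtain w where w: "w < ?N" "?e ! w = T i k" using es_idx[of q m p "T i k"] i k by auto
    have "w \<noteq> ?N - 1" using w es_N1[of q m p] by auto
    then show "twoub (leC c q m p) (lab q m p (PX i)) (lab q m p (PY j)) (lab q m p (PZ k))"
      unfolding twoub_def using U w jc by blast
  qed
qed

lemma twoub_iso:
  assumes f: "bij_betw f C C" and iso: "\<forall>x\<in>C. \<forall>y\<in>C. le0 x y \<longleftrightarrow> le (f x) (f y)"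
    and van0: "\<forall>x y. le0 x y \<longrightarrow> x \<in> C \<and> y \<in> C" and van: "\<forall>x y. le x y \<longrightarrow> x \<in> C \<and> y \<in> C"
    and abd: "a \<in> C" "b \<in> C" "d \<in> C"
  shows "twoub le0 (inv_into C f a) (inv_into C f b) (inv_into C f d) \<longleftrightarrow> twoub le a b d"
proof -
  let ?g = "inv_into C f"
  have gC: "\<And>x. x \<in> C \<Longrightarrow> ?g x \<in> C" using f by (metis bij_betw_def inv_into_into)
  have fg: "\<And>x. x \<in> C \<Longrightarrow> f (?g x) = x" using f by (metis bij_betw_def f_inv_into_f)
  have fC: "\<And>x. x \<in> C \<Longrightarrow> f x \<in> C" using f by (meson bij_betwE)
  have gf: "\<And>x. x \<in> C \<Longrightarrow> ?g (f x) = x" using f by (metis bij_betw_def inv_into_f_f)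
  have key: "\<And>x w. x \<in> C \<Longrightarrow> w \<in> C \<Longrightarrow> le0 (?g x) w \<longleftrightarrow> le x (f w)"
    using iso gC fg by metis
  show ?thesis
  proof
    assume "twoub le0 (?g a) (?g b) (?g d)"
    then obtain w1 w2 where w: "w1 \<noteq> w2" "le0 (?g a) w1" "le0 (?g b) w1" "le0 (?g d) w1"
      "le0 (?g a) w2" "le0 (?g b) w2" "le0 (?g d) w2" unfolding twoub_def by blast
    have wC: "w1 \<in> C" "w2 \<in> C" using w van0 by auto
    have "f w1 \<noteq> f w2" using w(1) wC gf by metis
    then show "twoub le a b d" unfolding twoub_def using w wC key abd by blast
  next
    assume "twoub le a b d"
    then obtain w1 w2 where w: "w1 \<noteq> w2" "le a w1" "le b w1" "le d w1"
      "le a w2" "le b w2" "le d w2" unfolding twoub_def by blast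
    have wC: "w1 \<in> C" "w2 \<in> C" using w van by auto
    have "?g w1 \<noteq> ?g w2" using w(1) wC fg by metis
    moreover have "\<And>x w. x \<in> C \<Longrightarrow> w \<in> C \<Longrightarrow> le x w \<Longrightarrow> le0 (?g x) (?g w)"
      using key gC fg by metis
    ultimately show "twoub le0 (?g a) (?g b) (?g d)" unfolding twoub_def using w wC abd by blast
  qed
qed

definition PTS :: "nat \<Rightarrow> nat \<Rightarrow> nat \<Rightarrow> el set" where
  "PTS q m p = {e. vel q m p e \<and> ispt e}"

definition Dec :: "nat \<Rightarrow> nat \<Rightarrow> (nat \<Rightarrow> nat \<Rightarrow> bool) \<Rightarrow> (el \<Rightarrow> nat) \<Rightarrow> nat \<Rightarrow> nat \<Rightarrow> nat" where
  "Dec q m le0 h = (\<lambda>i. if i < q then (\<lambda>k. if k < q then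
      (THE j. j < m \<and> twoub le0 (h (PX i)) (h (PY j)) (h (PZ k))) else undefined) else undefined)"

lemma leC_van: "leC c q m p x y \<Longrightarrow> x \<in> carrier_of (NN q m p) \<and> y \<in> carrier_of (NN q m p)"
  unfolding leC_def gle_def carrier_of_def by auto

lemma class_rep:
  assumes c0: "c0 \<in> VV q m q" and c': "c' \<in> VV q m q"
    and R: "(leC c0 q m p, leC c' q m p) \<in> lat_iso_rel (NN q m p)"
  shows "\<exists>h \<in> PTS q m p \<rightarrow>\<^sub>E {..<NN q m p}. c' = Dec q m (leC c0 q m p) h"
proof -
  let ?N = "NN q m p" and ?C = "carrier_of (NN q m p)"
  obtain f where f: "bij_betw f ?C ?C" and iso: "\<forall>x\<in>?C. \<forall>y\<in>?C. leC c0 q m p x y \<longleftrightarrow> leC c' q m p (f x) (f y)"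
    using R unfolding lat_iso_rel_def by auto
  let ?g = "inv_into ?C f"
  define h where "h = restrict (\<lambda>e. ?g (lab q m p e)) (PTS q m p)"
  have gC: "\<And>x. x \<in> ?C \<Longrightarrow> ?g x \<in> ?C" using f by (metis bij_betw_def inv_into_into)
  have hin: "h \<in> PTS q m p \<rightarrow>\<^sub>E {..<?N}"
    unfolding h_def PTS_def using gC lab unfolding carrier_of_def by auto
  have cv': "cv q m c'" using c' VV_cv by auto
  have eq: "c' i k = Dec q m (leC c0 q m p) h i k" for i k
  proof (cases "i < q \<and> k < q")
    case True
    then have i: "i < q" and k: "k < q" by auto
    have "\<And>j. j < m \<Longrightarrow> twoub (leC c0 q m p) (h (PX i)) (h (PY j)) (h (PZ k)) \<longleftrightarrow> j = c' i k"
    proof -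
      fix j assume j: "j < m"
      have hv: "h (PX i) = ?g (lab q m p (PX i))" "h (PY j) = ?g (lab q m p (PY j))"
        "h (PZ k) = ?g (lab q m p (PZ k))" unfolding h_def PTS_def using i j k by auto
      have inC: "lab q m p (PX i) \<in> ?C" "lab q m p (PY j) \<in> ?C" "lab q m p (PZ k) \<in> ?C"
        using lab[of q m p] i j k unfolding carrier_of_def by auto
      show "twoub (leC c0 q m p) (h (PX i)) (h (PY j)) (h (PZ k)) \<longleftrightarrow> j = c' i k"
        unfolding hv using twoub_iso[OF f iso _ _ inC] leC_van twoub3[OF i k j, of c' p] by blast
    qed
    moreover have "c' i k < m" using cv' i k unfolding cv_def by auto
    ultimately have "(THE j. j < m \<and> twoub (leC c0 q m p) (h (PX i)) (h (PY j)) (h (PZ k))) = c' i k"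
      by (intro the_equality) auto
    then show ?thesis unfolding Dec_def using i k by simp
  next
    case False
    then show ?thesis using c' unfolding Dec_def VV_def by (auto simp: PiE_def extensional_def Pi_def)
  qed
  show ?thesis using hin eq by blast
qed




lemma PTS_sub: "PTS q m p \<subseteq> PX ` {..<q} \<union> PY ` {..<m} \<union> PZ ` {..<q}"
proof
  fix e assume "e \<in> PTS q m p"
  then have "vel q m p e" "ispt e" unfolding PTS_def by auto
  then show "e \<in> PX ` {..<q} \<union> PY ` {..<m} \<union> PZ ` {..<q}" by (cases e) auto
qed

lemma PTS_fin: "finite (PTS q m p)" by (rule finite_subset[OF PTS_sub]) auto

lemma PTS_card: "card (PTS q m p) \<le> 2*q + m"
proof -
  have a: "card (PX ` {..<q}) \<le> q" using card_image_le[of "{..<q}" PX] by simp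
  have b: "card (PY ` {..<m}) \<le> m" using card_image_le[of "{..<m}" PY] by simp
  have c: "card (PZ ` {..<q}) \<le> q" using card_image_le[of "{..<q}" PZ] by simp
  have u1: "card (PX ` {..<q} \<union> PY ` {..<m} \<union> PZ ` {..<q}) \<le> card (PX ` {..<q} \<union> PY ` {..<m}) + card (PZ ` {..<q})"
    by (rule card_Un_le)
  have u2: "card (PX ` {..<q} \<union> PY ` {..<m}) \<le> card (PX ` {..<q}) + card (PY ` {..<m})"
    by (rule card_Un_le)
  have "card (PTS q m p) \<le> card (PX ` {..<q} \<union> PY ` {..<m} \<union> PZ ` {..<q})"
    using PTS_sub by (intro card_mono) auto
  then show ?thesis using a b c u1 u2 by linarith
qed

lemma leC_inj: assumes c: "c \<in> VV q m q" and c': "c' \<in> VV q m q" and e: "leC c q m p = leC c' q m p"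
  shows "c = c'"
proof -
  have cv: "cv q m c" using c VV_cv by auto
  have P: "c \<in> {..<q} \<rightarrow>\<^sub>E ({..<q} \<rightarrow>\<^sub>E {..<m})" "c' \<in> {..<q} \<rightarrow>\<^sub>E ({..<q} \<rightarrow>\<^sub>E {..<m})"
    using c c' unfolding VV_def by simp_all
  have "c i k = c' i k" for i k
  proof (cases "i < q")
    case i: True
    show ?thesis
    proof (cases "k < q")
      case k: True
      have j: "c i k < m" using cv i k unfolding cv_def by auto
      have "twoub (leC c q m p) (lab q m p (PX i)) (lab q m p (PY (c i k))) (lab q m p (PZ k))"
        using twoub3[OF i k j, of c p] by simp
      then have "twoub (leC c' q m p) (lab q m p (PX i)) (lab q m p (PY (c i k))) (lab q m p (PZ k))"
        using e by simp
      then show ?thesis using twoub3[OF i k j, of c' p] by simp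
    next
      case False
      have "c i \<in> {..<q} \<rightarrow>\<^sub>E {..<m}" "c' i \<in> {..<q} \<rightarrow>\<^sub>E {..<m}" using P i by (auto intro: PiE_mem)
      then show ?thesis using False by (metis PiE_arb lessThan_iff)
    qed
  next
    case False
    then show ?thesis using P by (metis PiE_arb lessThan_iff)
  qed
  then show ?thesis by (intro ext)
qed

definition SS :: "nat \<Rightarrow> (nat \<Rightarrow> nat \<Rightarrow> bool) set" where
  "SS N = {le. lattice_on N le \<and> semimodular_on N le \<and> vert_indecomposable N le}"

lemma SS_fin: "finite (SS N)"
proof -
  have "SS N \<subseteq> (\<lambda>r x y. (x, y) \<in> r) ` Pow ({..<N} \<times> {..<N})"
  proof
    fix le assume "le \<in> SS N"
    then have L: "lattice_on N le" unfolding SS_def by simp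
    have v0: "\<forall>x y. le x y \<longrightarrow> x \<in> carrier_of N \<and> y \<in> carrier_of N"
      by (rule conjunct1[OF conjunct2[OF L[unfolded lattice_on_def]]])
    have v: "\<And>x y. le x y \<Longrightarrow> x < N \<and> y < N" using v0 unfolding carrier_of_def by blast
    have "le = (\<lambda>x y. (x, y) \<in> {(x, y). le x y})" by auto
    moreover have "{(x, y). le x y} \<in> Pow ({..<N} \<times> {..<N})" using v by auto
    ultimately show "le \<in> (\<lambda>r x y. (x, y) \<in> r) ` Pow ({..<N} \<times> {..<N})" by blast
  qed
  then show ?thesis by (rule finite_subset) auto
qed

lemma main_count:
  assumes q: "0 < q" and m: "3 * q \<le> m"
  shows "card (VV q m q) \<le> s_vi (NN q m p) * NN q m p ^ (2*q + m)"
proof -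
  let ?N = "NN q m p" and ?R = "lat_iso_rel (NN q m p)"
  define F where "F = (\<lambda>c. leC c q m p) ` VV q m q"
  have m0: "0 < m" using q m by auto
  have injF: "inj_on (\<lambda>c. leC c q m p) (VV q m q)"
  proof (rule inj_onI)
    fix x y assume "x \<in> VV q m q" "y \<in> VV q m q" "leC x q m p = leC y q m p"
    then show "x = y" by (rule leC_inj)
  qed
  have cardF: "card F = card (VV q m q)" unfolding F_def using injF by (rule card_image)
  have FS: "F \<subseteq> SS ?N" unfolding F_def SS_def using leC_good[OF VV_cv q m0] by auto
  have finF: "finite F" unfolding F_def using finite_VV by auto
  define H where "H = PTS q m p \<rightarrow>\<^sub>E {..<?N}"
  have cardH: "card H = ?N ^ card (PTS q m p)" unfolding H_def
    using PTS_fin by (simp add: card_PiE)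
  have finH: "finite H" unfolding H_def using PTS_fin by (auto intro!: finite_PiE)
  have refl: "(le, le) \<in> ?R" for le
    unfolding lat_iso_rel_def by (auto intro!: exI[of _ id])
  have classb: "card (K \<inter> F) \<le> card H" if K: "K \<in> F // ?R" for K
  proof -
    obtain le0 where le0: "le0 \<in> F" and Keq: "K = ?R `` {le0}" using K unfolding quotient_def by auto
    obtain c0 where c0: "c0 \<in> VV q m q" and l0: "le0 = leC c0 q m p" using le0 unfolding F_def by auto
    have "K \<inter> F \<subseteq> (\<lambda>h. leC (Dec q m le0 h) q m p) ` H"
    proof
      fix le assume "le \<in> K \<inter> F"
      then have leK: "le \<in> ?R `` {le0}" and leF: "le \<in> F" using Keq by auto
      from leK have R: "(le0, le) \<in> ?R" by (rule ImageE) simp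
      from leF obtain c' where c': "c' \<in> VV q m q" "le = leC c' q m p" unfolding F_def by blast
      obtain h where "h \<in> H" "c' = Dec q m le0 h"
        using class_rep[OF c0 c'(1)] R c'(2) l0 unfolding H_def by auto
      then show "le \<in> (\<lambda>h. leC (Dec q m le0 h) q m p) ` H" using c'(2) by auto
    qed
    then have "card (K \<inter> F) \<le> card ((\<lambda>h. leC (Dec q m le0 h) q m p) ` H)"
      using finH by (intro card_mono) auto
    also have "\<dots> \<le> card H" by (rule card_image_le[OF finH])
    finally show ?thesis .
  qed
  have finQ: "finite (F // ?R)" unfolding quotient_def by (rule finite_UN_I[OF finF]) simp
  have "F \<subseteq> (\<Union>K \<in> F // ?R. K \<inter> F)"
  proof
    fix le
    assume leF: "le \<in> F"
    show "le \<in> (\<Union>K \<in> F // ?R. K \<inter> F)"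
    proof (rule UN_I[of "?R `` {le}"])
      show "?R `` {le} \<in> F // ?R" using leF by (rule quotientI)
      show "le \<in> ?R `` {le} \<inter> F" using refl[of le] leF by blast
    qed
  qed
  then have "card F \<le> card (\<Union>K \<in> F // ?R. K \<inter> F)"
    using finQ finF by (intro card_mono) auto
  also have "\<dots> \<le> (\<Sum>K \<in> F // ?R. card (K \<inter> F))" by (rule card_UN_le[OF finQ])
  also have "\<dots> \<le> (\<Sum>K \<in> F // ?R. card H)" using classb by (intro sum_mono) auto
  also have "\<dots> = card (F // ?R) * card H" by simp
  also have "card (F // ?R) \<le> s_vi ?N"
  proof -
    have "F // ?R \<subseteq> SS ?N // ?R" unfolding quotient_def by (rule UN_mono[OF FS]) simp
    moreover have "finite (SS ?N // ?R)" unfolding quotient_def by (rule finite_UN_I[OF SS_fin]) simp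
    ultimately show ?thesis unfolding s_vi_def SS_def[symmetric] by (rule card_mono[rotated])
  qed
  then have "card (F // ?R) * card H \<le> s_vi ?N * card H" by simp
  also have "card H \<le> ?N ^ (2*q + m)"
    unfolding cardH using PTS_card NN_ge[of q m p] by (intro power_increasing) auto
  then have "s_vi ?N * card H \<le> s_vi ?N * ?N ^ (2*q + m)" by simp
  finally show ?thesis using cardF by simp
qed

lemma big_ineq:
  fixes q n :: nat
  assumes q: "59049 \<le> q" and n: "n \<le> 9 * q^2"
  shows "3 ^ n * n ^ (5 * q) \<le> q ^ (q * q)"
proof -
  have q9: "9 * q^2 \<le> q^3"
  proof -
    have "9 * (q * q) \<le> q * (q * q)" using q by (intro mult_le_mono1) linarith
    then show ?thesis by (simp only: power2_eq_square power3_eq_cube mult.assoc)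
  qed
  have q15: "15 * q \<le> q * q" using q by (intro mult_le_mono1) linarith
  have a: "n ^ (5 * q) \<le> q ^ (15 * q)"
  proof -
    have "n ^ (5 * q) \<le> (q^3) ^ (5 * q)" using n q9 by (intro power_mono) auto
    also have "\<dots> = q ^ (15 * q)" by (simp add: power_mult[symmetric])
    finally show ?thesis .
  qed
  have b: "(3::nat) ^ n \<le> 3 ^ (9 * q^2)" using n by (intro power_increasing) auto
  have c: "9 * q^2 \<le> 10 * (q * q - 15 * q)"
  proof -
    have h: "150 * q \<le> q * q" using q by (intro mult_le_mono1) linarith
    have "10 * (q * q - 15 * q) = 10 * (q * q) - 150 * q" by (simp add: diff_mult_distrib2)
    then show ?thesis unfolding power2_eq_square using h by linarith
  qed
  have d: "(3::nat) ^ (9 * q^2) \<le> 3 ^ (10 * (q * q - 15 * q))" using c by (intro power_increasing) auto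
  have e: "(3::nat) ^ (10 * (q * q - 15 * q)) \<le> q ^ (q * q - 15 * q)"
  proof -
    have "(3::nat) ^ (10 * (q * q - 15 * q)) = (3 ^ 10) ^ (q * q - 15 * q)" by (simp add: power_mult)
    also have "\<dots> \<le> q ^ (q * q - 15 * q)" using q by (intro power_mono) auto
    finally show ?thesis .
  qed
  have f: "q ^ (q * q) = q ^ (q * q - 15 * q) * q ^ (15 * q)"
    using q15 by (simp add: power_add[symmetric])
  have bde: "(3::nat) ^ n \<le> q ^ (q * q - 15 * q)" using b d e by linarith
  have "3 ^ n * n ^ (5 * q) \<le> q ^ (q * q - 15 * q) * q ^ (15 * q)"
    using bde a by (intro mult_mono) auto
  then show ?thesis using f by simp
qed

lemma choose_q:
  fixes n :: nat
  assumes n: "8 * 59049^2 \<le> n"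
  shows "\<exists>q. 59049 \<le> q \<and> 8 * q^2 \<le> n \<and> n \<le> 9 * q^2"
proof -
  define q where "q = (LEAST q. n < 8 * (Suc q)^2)"
  have ex: "n < 8 * (Suc n)^2" by (simp add: power2_eq_square)
  have lt: "n < 8 * (Suc q)^2" unfolding q_def by (rule LeastI[of "\<lambda>q. n < 8 * (Suc q)^2" n, OF ex])
  have min: "\<And>q'. q' < q \<Longrightarrow> \<not> n < 8 * (Suc q')^2" unfolding q_def by (rule not_less_Least)
  have q1: "59049 \<le> q"
  proof (rule ccontr)
    assume "\<not> 59049 \<le> q"
    then have "q < 59049" by simp
    then have "Suc q \<le> 59049" by auto
    then have "(Suc q)^2 \<le> 59049^2" by (rule power_mono) simp
    then have "8 * (Suc q)^2 \<le> 8 * 59049^2" by (rule mult_le_mono2)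
    then show False using lt n by auto
  qed
  have lo: "8 * q^2 \<le> n"
  proof -
    obtain q' where q': "q = Suc q'" using q1 by (cases q) auto
    then show ?thesis using min[of q'] by auto
  qed
  have hi: "n \<le> 9 * q^2"
  proof -
    have "8 * (Suc q)^2 \<le> 9 * q^2"
    proof -
      have "17 * q \<le> q * q" using q1 by (intro mult_le_mono1) linarith
      then have "16 * q + 8 \<le> q * q" using q1 by linarith
      moreover have "8 * (Suc q)^2 = 8 * (q * q) + 16 * q + 8" by (simp add: power2_eq_square algebra_simps)
      ultimately show ?thesis by (simp only: power2_eq_square; linarith)
    qed
    then show ?thesis using lt by auto
  qed
  show ?thesis using q1 lo hi by blast
qed

theorem proposition3p9:
  shows "\<exists>n0::nat. \<forall>n\<ge>n0. (2.6797::real) ^ n \<le> real (s_vi n)"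
proof (intro exI allI impI)
  fix n :: nat assume n: "8 * 59049^2 \<le> n"
  obtain q where q: "59049 \<le> q" "8 * q^2 \<le> n" "n \<le> 9 * q^2" using choose_q[OF n] by blast
  define m where "m = 3 * q"
  define p where "p = n - (5 + 5 * q + 7 * q^2)"
  have base: "5 + 5 * q + 7 * q^2 \<le> 8 * q^2"
  proof -
    have "6 * q \<le> q * q" using q(1) by (intro mult_le_mono1) linarith
    then have "5 + 5 * q \<le> q * q" using q(1) by linarith
    then show ?thesis by (simp only: power2_eq_square; linarith)
  qed
  have NN: "NN q m p = n"
    unfolding NN_def length_es m_def p_def using base q(2) by (simp add: power2_eq_square algebra_simps)
  have q0: "0 < q" using q(1) by auto
  have "q ^ (q * q) \<le> card (VV q m q)"
    using count_VV[of q q m] unfolding m_def by (simp add: power_mult[symmetric])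
  also have "\<dots> \<le> s_vi n * n ^ (2 * q + m)" using main_count[OF q0, of m p] NN unfolding m_def by simp
  finally have A: "q ^ (q * q) \<le> s_vi n * n ^ (5 * q)" unfolding m_def by simp
  have B: "3 ^ n * n ^ (5 * q) \<le> q ^ (q * q)" using big_ineq[OF q(1) q(3)] .
  have npos: "0 < n ^ (5 * q)" using n by simp
  have "3 ^ n \<le> s_vi n" using A B npos by (metis le_trans mult_le_cancel2 not_less0 zero_less_iff_neq_zero)
  then have "(3::real) ^ n \<le> real (s_vi n)" by (metis of_nat_le_iff of_nat_numeral of_nat_power)
  moreover have "(2.6797::real) ^ n \<le> 3 ^ n" by (intro power_mono) auto
  ultimately show "(2.6797::real) ^ n \<le> real (s_vi n)" by linarith
qed


end
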